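(* Let $\mathcal{C}$ be a translation based cipher over $V=(\mathbb{F}_2)^{mn}$ with $m\ge3$ and $n\ge2$. Suppose that there is a brick $\gamma_i$ (acting on $V_i$) of the bricklayer transformation of a proper round $h$ such that $$\mathrm{Alt}(V_i)\subseteq\langle T(V_i),\ \gamma_iT(V_i)\gamma_i^{-1}\rangle.$$ If $\Gamma_h(\mathcal{C})$ is primitive, then it is not of affine type, i.e. $\Gamma_h(\mathcal{C})$ is not contained in $\mathrm{AGL}(mn,2)$ (the affine group of $V$).
   Context: Permutations act on the right. Let $m,n>1$ and $V=V_1\oplus\dots\oplus V_n$ with each $V_i\cong(\mathbb{F}_2)^m$. For $v$ in a vector space $X$, $\sigma_v$ is $x\mapsto x+v$ and $T(X)=\{\sigma_v:v\in X\}$. A bricklayer transformation is a permutation $\gamma$ of $V$ with permutations ("bricks") $\gamma_i$ of $V_i$ such that $(v_1+\dots+v_n)\gamma=v_1\gamma_1+\dots+v_n\gamma_n$. A wall is a nontrivial proper subspace of $V$ that is a sum of some $V_i$; $\lambda\in\mathrm{GL}(V)$ is a proper mixing layer if no wall is $\lambda$-invariant. A tb cipher $\mathcal{C}=\{\tau_k:k\in\mathcal{K}\}$ has $\tau_k=\tau_{k,1}\cdots\tau_{k,l}$ with $\tau_{k,h}=\gamma_h\lambda_h\sigma_{\phi(k,h)}$, $\gamma_h$ a key-independent bricklayer transformation with $0\gamma_h=0$, $\lambda_h\in\mathrm{GL}(V)$ key-independent, $\phi:\mathcal{K}\times\{1,\dots,l\}\to V$; a round $h$ is proper if $\lambda_h$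 is a proper mixing layer and $k\mapsto\phi(k,h)$ is onto $V$, and a tb cipher has at least one proper round. $\Gamma_h(\mathcal{C})=\langle\tau_{k,h}:k\in\mathcal{K}\rangle$. *)

theory Defs
  imports "HOL-Combinatorics.Permutations"
begin

text \<open>A brick space V_i = (F_2)^m is represented by the set Bcar m of
  bit vectors nat => bool vanishing outside {0..<m}; the whole space V = V_0 + ... + V_(n-1)
  is represented by Vcar m n, functions nat => nat => bool (brick index, bit index)
  vanishing outside {0..<n} x {0..<m}.
  Permutations of a carrier C are functions that are bijective on C and the identity
  outside C (i.e. they satisfy p permutes C); composition f o g means apply g first.\<close>

type_synonym bvec = "nat \<Rightarrow> bool"
type_synonym vvec = "nat \<Rightarrow> nat \<Rightarrow> bool"

definition Bcar :: "nat \<Rightarrow> bvec set" where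
  "Bcar m = {v. \<forall>j. m \<le> j \<longrightarrow> \<not> v j}"

definition Vcar :: "nat \<Rightarrow> nat \<Rightarrow> vvec set" where
  "Vcar m n = {x. \<forall>i j. (n \<le> i \<or> m \<le> j) \<longrightarrow> \<not> x i j}"

definition badd :: "bvec \<Rightarrow> bvec \<Rightarrow> bvec" where
  "badd u v = (\<lambda>j. u j \<noteq> v j)"

definition vadd :: "vvec \<Rightarrow> vvec \<Rightarrow> vvec" where
  "vadd x y = (\<lambda>i j. x i j \<noteq> y i j)"

definition bzero :: bvec where "bzero = (\<lambda>_. False)"
definition vzero :: vvec where "vzero = (\<lambda>_ _. False)"

definition rperm :: "'a set \<Rightarrow> ('a \<Rightarrow> 'a) \<Rightarrow> 'a \<Rightarrow> 'a" where
  "rperm C f = (\<lambda>x. if x \<in> C then f x else x)"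

definition btrans :: "nat \<Rightarrow> bvec \<Rightarrow> bvec \<Rightarrow> bvec" where
  "btrans m v = rperm (Bcar m) (\<lambda>u. badd u v)"

definition vtrans :: "nat \<Rightarrow> nat \<Rightarrow> vvec \<Rightarrow> vvec \<Rightarrow> vvec" where
  "vtrans m n v = rperm (Vcar m n) (\<lambda>x. vadd x v)"

definition BT :: "nat \<Rightarrow> (bvec \<Rightarrow> bvec) set" where
  "BT m = btrans m ` Bcar m"

inductive_set perm_gen :: "('a \<Rightarrow> 'a) set \<Rightarrow> ('a \<Rightarrow> 'a) set" for S where
  gen_id: "id \<in> perm_gen S"
| gen_base: "s \<in> S \<Longrightarrow> s \<in> perm_gen S"
| gen_comp: "a \<in> perm_gen S \<Longrightarrow> b \<in> perm_gen S \<Longrightarrow> a \<circ> b \<in> perm_gen S"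
| gen_inv: "a \<in> perm_gen S \<Longrightarrow> inv a \<in> perm_gen S"

definition Alt :: "'a set \<Rightarrow> ('a \<Rightarrow> 'a) set" where
  "Alt C = {p. p permutes C \<and> evenperm p}"

definition bricklayer :: "nat \<Rightarrow> nat \<Rightarrow> (nat \<Rightarrow> bvec \<Rightarrow> bvec) \<Rightarrow> vvec \<Rightarrow> vvec" where
  "bricklayer m n g = rperm (Vcar m n) (\<lambda>x i. if i < n then g i (x i) else bzero)"

text \<open>GL(V): F_2-linear (= additive) bijections of V.\<close>
definition GLV :: "nat \<Rightarrow> nat \<Rightarrow> (vvec \<Rightarrow> vvec) \<Rightarrow> bool" where
  "GLV m n L \<longleftrightarrow> bij_betw L (Vcar m n) (Vcar m n) \<and>
     (\<forall>x\<in>Vcar m n. \<forall>y\<in>Vcar m n. L (vadd x y) = vadd (L x) (L y))"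

definition wall :: "nat \<Rightarrow> nat \<Rightarrow> nat set \<Rightarrow> vvec set" where
  "wall m n I = {x \<in> Vcar m n. \<forall>i. i \<notin> I \<longrightarrow> x i = bzero}"

definition proper_mixing :: "nat \<Rightarrow> nat \<Rightarrow> (vvec \<Rightarrow> vvec) \<Rightarrow> bool" where
  "proper_mixing m n L \<longleftrightarrow> GLV m n L \<and>
     (\<forall>I. I \<subseteq> {..<n} \<and> I \<noteq> {} \<and> I \<noteq> {..<n} \<longrightarrow> \<not> (L ` wall m n I \<subseteq> wall m n I))"

text \<open>Round function tau_{k,h} = gamma_h lambda_h sigma_{phi(k,h)} (right action:
  first gamma_h, then lambda_h, then the translation).\<close>
definition round_fun :: "nat \<Rightarrow> nat \<Rightarrow> (nat \<Rightarrow> nat \<Rightarrow> bvec \<Rightarrow> bvec) \<Rightarrow> (nat \<Rightarrow> vvec \<Rightarrow> vvec)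
    \<Rightarrow> ('k \<Rightarrow> nat \<Rightarrow> vvec) \<Rightarrow> 'k \<Rightarrow> nat \<Rightarrow> vvec \<Rightarrow> vvec" where
  "round_fun m n g lam phi k h =
     rperm (Vcar m n) (vtrans m n (phi k h) \<circ> lam h \<circ> bricklayer m n (g h))"

definition Gamma :: "nat \<Rightarrow> nat \<Rightarrow> (nat \<Rightarrow> nat \<Rightarrow> bvec \<Rightarrow> bvec) \<Rightarrow> (nat \<Rightarrow> vvec \<Rightarrow> vvec)
    \<Rightarrow> ('k \<Rightarrow> nat \<Rightarrow> vvec) \<Rightarrow> 'k set \<Rightarrow> nat \<Rightarrow> (vvec \<Rightarrow> vvec) set" where
  "Gamma m n g lam phi K h = perm_gen ((\<lambda>k. round_fun m n g lam phi k h) ` K)"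

definition proper_round :: "nat \<Rightarrow> nat \<Rightarrow> (nat \<Rightarrow> vvec \<Rightarrow> vvec)
    \<Rightarrow> ('k \<Rightarrow> nat \<Rightarrow> vvec) \<Rightarrow> 'k set \<Rightarrow> nat \<Rightarrow> bool" where
  "proper_round m n lam phi K h \<longleftrightarrow>
     proper_mixing m n (lam h) \<and> (\<lambda>k. phi k h) ` K = Vcar m n"

text \<open>Translation based cipher with l rounds (rounds indexed 1..l), key set K,
  bricks g h i (round h, brick i < n), mixing layers lam h, key schedule phi.\<close>
definition tb_cipher :: "nat \<Rightarrow> nat \<Rightarrow> nat \<Rightarrow> 'k set \<Rightarrow> (nat \<Rightarrow> nat \<Rightarrow> bvec \<Rightarrow> bvec)
    \<Rightarrow> (nat \<Rightarrow> vvec \<Rightarrow> vvec) \<Rightarrow> ('k \<Rightarrow> nat \<Rightarrow> vvec) \<Rightarrow> bool" where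
  "tb_cipher m n l K g lam phi \<longleftrightarrow>
     1 < m \<and> 1 < n \<and>
     (\<forall>h\<in>{1..l}.
        (\<forall>i<n. g h i permutes Bcar m) \<and>
        bricklayer m n (g h) vzero = vzero \<and>
        GLV m n (lam h) \<and>
        (\<forall>k\<in>K. phi k h \<in> Vcar m n)) \<and>
     (\<exists>h\<in>{1..l}. proper_round m n lam phi K h)"

definition primitive_on :: "'a set \<Rightarrow> ('a \<Rightarrow> 'a) set \<Rightarrow> bool" where
  "primitive_on C G \<longleftrightarrow> C \<noteq> {} \<and>
     (\<forall>x\<in>C. \<forall>y\<in>C. \<exists>g\<in>G. g x = y) \<and>
     (\<forall>B. B \<subseteq> C \<and> B \<noteq> {} \<and> (\<forall>g\<in>G. g ` B = B \<or> g ` B \<inter> B = {})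
          \<longrightarrow> card B = 1 \<or> B = C)"

definition AGL :: "nat \<Rightarrow> nat \<Rightarrow> (vvec \<Rightarrow> vvec) set" where
  "AGL m n = {f. \<exists>L b. GLV m n L \<and> b \<in> Vcar m n \<and>
       f = rperm (Vcar m n) (\<lambda>x. vadd (L x) b)}"

end

theory Submission
  imports Defs
begin

lemma badd_Bcar: "u \<in> Bcar m \<Longrightarrow> v \<in> Bcar m \<Longrightarrow> badd u v \<in> Bcar m"
  by (auto simp: Bcar_def badd_def)

lemma btrans_in: "v \<in> Bcar m \<Longrightarrow> btrans m v \<in> BT m"
  by (simp add: BT_def)

lemma bzero_Bcar: "bzero \<in> Bcar m" by (simp add: Bcar_def bzero_def)

lemma btrans_zero: "btrans m bzero = id"
  by (auto simp: btrans_def rperm_def badd_def bzero_def)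

lemma btrans_comp: "u \<in> Bcar m \<Longrightarrow> v \<in> Bcar m \<Longrightarrow> btrans m u \<circ> btrans m v = btrans m (badd v u)"
  by (rule ext) (auto simp: btrans_def rperm_def badd_Bcar, auto simp: badd_def)

lemma btrans_inv: "v \<in> Bcar m \<Longrightarrow> inv (btrans m v) = btrans m v"
proof -
  assume v: "v \<in> Bcar m"
  have "btrans m v \<circ> btrans m v = id"
  proof -
    have "badd v v = bzero" by (simp add: badd_def bzero_def)
    then show ?thesis using btrans_comp[OF v v] btrans_zero by simp
  qed
  then show ?thesis by (metis inv_unique_comp)
qed

lemma perm_gen_BT: assumes "S \<subseteq> BT m" and "f \<in> perm_gen S" shows "f \<in> BT m"
  using assms(2)
proof (induction f rule: perm_gen.induct)
  case gen_id
  then show ?case using btrans_in[OF bzero_Bcar] btrans_zero by metis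
next
  case (gen_base s) then show ?case using assms(1) by blast
next
  case (gen_comp a b)
  then obtain u v where "u \<in> Bcar m" "v \<in> Bcar m" "a = btrans m u" "b = btrans m v"
    by (auto simp: BT_def)
  then show ?case using btrans_comp btrans_in badd_Bcar by metis
next
  case (gen_inv a)
  then obtain u where "u \<in> Bcar m" "a = btrans m u" by (auto simp: BT_def)
  then show ?case using btrans_inv btrans_in by metis
qed

lemma conj_btrans:
  assumes p: "p permutes Bcar m"
    and add: "\<forall>x\<in>Bcar m. \<forall>y\<in>Bcar m. p (badd x y) = badd (p x) (p y)"
    and v: "v \<in> Bcar m"
  shows "inv p \<circ> btrans m v \<circ> p = btrans m (inv p v)"
proof (rule ext)
  fix x
  have ip: "inv p permutes Bcar m" using permutes_inv[OF p] .
  have iv: "inv p v \<in> Bcar m" using permutes_in_image[OF ip] v by simp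
  show "(inv p \<circ> btrans m v \<circ> p) x = btrans m (inv p v) x"
  proof (cases "x \<in> Bcar m")
    case True
    have px: "p x \<in> Bcar m" using permutes_in_image[OF p] True by simp
    have "p (badd x (inv p v)) = badd (p x) v"
      using add True iv permutes_inverses[OF p] by metis
    then have "inv p (badd (p x) v) = badd x (inv p v)"
      using permutes_inv_eq[OF p] by metis
    then show ?thesis using True px badd_Bcar[OF px v]
      by (simp add: btrans_def rperm_def)
  next
    case False
    then show ?thesis using permutes_not_in[OF p False] permutes_not_in[OF ip False]
      by (simp add: btrans_def rperm_def)
  qed
qed

theorem proposition4p2:
  fixes m n l :: nat and K :: "'k set"
    and g :: "nat \<Rightarrow> nat \<Rightarrow> bvec \<Rightarrow> bvec"
    and lam :: "nat \<Rightarrow> vvec \<Rightarrow> vvec"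
    and phi :: "'k \<Rightarrow> nat \<Rightarrow> vvec"
    and h i :: nat
  assumes "tb_cipher m n l K g lam phi"
    and "3 \<le> m" and "2 \<le> n"
    and "h \<in> {1..l}" and "proper_round m n lam phi K h"
    and "i < n"
    and "Alt (Bcar m) \<subseteq> perm_gen (BT m \<union> {inv (g h i) \<circ> t \<circ> g h i | t. t \<in> BT m})"
    and "primitive_on (Vcar m n) (Gamma m n g lam phi K h)"
  shows "\<not> (Gamma m n g lam phi K h \<subseteq> AGL m n)"
proof
  assume sub: "Gamma m n g lam phi K h \<subseteq> AGL m n"
  have tb: "(\<forall>i<n. g h i permutes Bcar m)" "bricklayer m n (g h) vzero = vzero"
    "GLV m n (lam h)"
    using assms(1,4) unfolding tb_cipher_def by auto
  have gp: "g h i permutes Bcar m" using tb(1) assms(6) by blast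
  have vz: "vzero \<in> Vcar m n" by (simp add: Vcar_def vzero_def)
  obtain k where k: "k \<in> K" "phi k h = vzero"
    using assms(5) vz unfolding proper_round_def by (metis imageE)
  define B where "B = bricklayer m n (g h)"
  define f where "f = round_fun m n g lam phi k h"
  have "f \<in> Gamma m n g lam phi K h"
    unfolding f_def Gamma_def using k(1) by (blast intro: perm_gen.gen_base)
  with sub obtain L b where Lb: "GLV m n L" "b \<in> Vcar m n"
    "f = rperm (Vcar m n) (\<lambda>x. vadd (L x) b)"
    unfolding AGL_def by blast
  have vaddV: "\<And>x y. x \<in> Vcar m n \<Longrightarrow> y \<in> Vcar m n \<Longrightarrow> vadd x y \<in> Vcar m n"
    by (auto simp: Vcar_def vadd_def)
  have BV: "\<And>x. x \<in> Vcar m n \<Longrightarrow> B x \<in> Vcar m n"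
  proof -
    fix x assume x: "x \<in> Vcar m n"
    have "\<And>i'. i' < n \<Longrightarrow> g h i' (x i') \<in> Bcar m"
    proof -
      fix i' assume "i' < n"
      then have "g h i' permutes Bcar m" using tb(1) by blast
      moreover have "x i' \<in> Bcar m" using x by (auto simp: Vcar_def Bcar_def)
      ultimately show "g h i' (x i') \<in> Bcar m" using permutes_in_image by metis
    qed
    then show "B x \<in> Vcar m n" using x
      by (auto simp: B_def bricklayer_def rperm_def Vcar_def Bcar_def bzero_def)
  qed
  have lamV: "\<And>x. x \<in> Vcar m n \<Longrightarrow> lam h x \<in> Vcar m n"
    using tb(3) unfolding GLV_def by (metis bij_betwE)

  have lamadd: "\<And>x y. x \<in> Vcar m n \<Longrightarrow> y \<in> Vcar m n \<Longrightarrow> lam h (vadd x y) = vadd (lam h x) (lam h y)"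
    using tb(3) unfolding GLV_def by blast
  have laminj: "inj_on (lam h) (Vcar m n)" using tb(3) unfolding GLV_def bij_betw_def by blast
  have Ladd: "\<And>x y. x \<in> Vcar m n \<Longrightarrow> y \<in> Vcar m n \<Longrightarrow> L (vadd x y) = vadd (L x) (L y)"
    using Lb(1) unfolding GLV_def by blast
  have vself: "\<And>x. vadd x x = vzero" by (simp add: vadd_def vzero_def)
  have v0: "\<And>x. vadd x vzero = x" by (simp add: vadd_def vzero_def)
  have vsc: "\<And>x y. vadd x y = vzero \<Longrightarrow> x = y"
    by (auto simp: vadd_def vzero_def fun_eq_iff)
  have L0: "L vzero = vzero" using Ladd[OF vz vz] vself vsc by metis
  have l0: "lam h vzero = vzero" using lamadd[OF vz vz] vself vsc by metis
  have feq: "\<And>x. x \<in> Vcar m n \<Longrightarrow> f x = lam h (B x)"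
  proof -
    fix x assume x: "x \<in> Vcar m n"
    show "f x = lam h (B x)"
      using x BV[OF x] lamV[OF BV[OF x]] k(2)
      by (simp add: f_def round_fun_def rperm_def vtrans_def B_def v0)
  qed
  have feq2: "\<And>x. x \<in> Vcar m n \<Longrightarrow> f x = vadd (L x) b"
    using Lb(3) by (simp add: rperm_def)
  have "b = vzero"
    using feq[OF vz] feq2[OF vz] L0 l0 tb(2) B_def by (simp add: vadd_def vzero_def)
  then have lBL: "\<And>x. x \<in> Vcar m n \<Longrightarrow> lam h (B x) = L x"
    using feq feq2 v0 by metis
  have Badd: "\<And>x y. x \<in> Vcar m n \<Longrightarrow> y \<in> Vcar m n \<Longrightarrow> B (vadd x y) = vadd (B x) (B y)"
  proof -
    fix x y assume x: "x \<in> Vcar m n" and y: "y \<in> Vcar m n"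
    have "lam h (B (vadd x y)) = lam h (vadd (B x) (B y))"
      using lBL[OF vaddV[OF x y]] Ladd[OF x y] lBL[OF x] lBL[OF y] lamadd[OF BV[OF x] BV[OF y]]
      by simp
    then show "B (vadd x y) = vadd (B x) (B y)"
      using laminj BV[OF vaddV[OF x y]] vaddV[OF BV[OF x] BV[OF y]] by (meson inj_onD)
  qed
  define emb where "emb = (\<lambda>u::bvec. (\<lambda>i'. if i' = i then u else bzero))"
  have embV: "\<And>u. u \<in> Bcar m \<Longrightarrow> emb u \<in> Vcar m n"
    using assms(6) by (auto simp: emb_def Vcar_def Bcar_def bzero_def)
  have Bemb: "\<And>u. u \<in> Bcar m \<Longrightarrow> B (emb u) i = g h i u"
    using embV assms(6) by (simp add: B_def bricklayer_def rperm_def emb_def)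
  have embadd: "\<And>u w. emb (badd u w) = vadd (emb u) (emb w)"
    by (auto simp: emb_def vadd_def badd_def bzero_def fun_eq_iff)
  have gadd: "\<forall>x\<in>Bcar m. \<forall>y\<in>Bcar m. g h i (badd x y) = badd (g h i x) (g h i y)"
  proof (intro ballI)
    fix x y assume x: "x \<in> Bcar m" and y: "y \<in> Bcar m"
    have "g h i (badd x y) = B (emb (badd x y)) i" using Bemb badd_Bcar[OF x y] by metis
    also have "\<dots> = vadd (B (emb x)) (B (emb y)) i" using embadd Badd embV x y by metis
    also have "\<dots> = badd (g h i x) (g h i y)" using Bemb x y by (simp add: vadd_def badd_def)
    finally show "g h i (badd x y) = badd (g h i x) (g h i y)" .
  qed
  have Ssub: "BT m \<union> {inv (g h i) \<circ> t \<circ> g h i | t. t \<in> BT m} \<subseteq> BT m"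
    using conj_btrans[OF gp gadd] btrans_in permutes_in_image[OF permutes_inv[OF gp]]
    by (auto simp: BT_def)
  define a :: bvec where "a = (\<lambda>j. j = 0)"
  define b' :: bvec where "b' = (\<lambda>j. j = 1)"
  define c :: bvec where "c = (\<lambda>j. j = 0 \<or> j = 1)"
  have abc: "a \<in> Bcar m" "b' \<in> Bcar m" "c \<in> Bcar m"
    using assms(2) by (auto simp: a_def b'_def c_def Bcar_def)
  have dist: "a \<noteq> b'" "b' \<noteq> c" "a \<noteq> c" "a \<noteq> bzero" "b' \<noteq> bzero" "c \<noteq> bzero"
    by (auto simp: a_def b'_def c_def bzero_def fun_eq_iff)
  define p where "p = transpose a b' \<circ> transpose b' c"
  have "p \<in> Alt (Bcar m)"
    unfolding Alt_def p_def
    using abc dist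
    by (auto simp: evenperm_comp permutation_swap_id evenperm_swap
        intro: permutes_compose permutes_swap_id)
  then have "p \<in> BT m" using assms(7) perm_gen_BT[OF Ssub] by blast
  then obtain v where v: "v \<in> Bcar m" "p = btrans m v" by (auto simp: BT_def)
  have "p bzero = bzero" using dist by (simp add: p_def transpose_def)
  moreover have "btrans m v bzero = v" using bzero_Bcar
    by (simp add: btrans_def rperm_def badd_def bzero_def)
  ultimately have "v = bzero" using v by simp
  then have "p = id" using v btrans_zero by simp
  moreover have "p c = a" using dist by (simp add: p_def transpose_def)
  ultimately show False using dist by simp
qed

end
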